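(* Let $k\in\mathbb{N}$ and let $G$ be a graph on $n$ vertices with minimum degree $\delta(G)\geq\delta\geq\frac{(k-1)n}{k}$. Suppose that $G$ has a $K_{k+1}$-component $C$ which does not contain a copy of $K_{k+2}$. Then there is a set of $k\delta-(k-1)n$ vertex-disjoint copies of $K_{k+1}$ in $G$ which all belong to $C$.
   Context: A $K_{k+1}$-walk in $G$ is a sequence $t_1,\dots,t_p$ of copies of $K_k$ such that for each $i\in[p-1]$ some copy of $K_{k+1}$ contains $t_i$ and $t_{i+1}$; $t_1,t_p$ are then $K_{k+1}$-connected; the equivalence classes of copies of $K_k$ are the $K_{k+1}$-components. For $\ell>k$, a copy of $K_\ell$ belongs to (is in) a component $C$ if it contains a copy of $K_k$ lying in $C$ (equivalently, all its copies of $K_k$ lie in $C$). $C$ contains a copy of $K_{k+2}$ if some copy of $K_{k+2}$ belongs to $C$. *)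

theory Defs
  imports Complex_Main
begin

definition simple_graph :: "'a set \<Rightarrow> ('a \<Rightarrow> 'a \<Rightarrow> bool) \<Rightarrow> bool" where
  "simple_graph V E \<longleftrightarrow> finite V \<and> (\<forall>x y. E x y \<longrightarrow> E y x) \<and> (\<forall>x. \<not> E x x)
     \<and> (\<forall>x y. E x y \<longrightarrow> x \<in> V \<and> y \<in> V)"

definition degree :: "'a set \<Rightarrow> ('a \<Rightarrow> 'a \<Rightarrow> bool) \<Rightarrow> 'a \<Rightarrow> nat" where
  "degree V E v = card {u \<in> V. E v u}"

definition copies :: "'a set \<Rightarrow> ('a \<Rightarrow> 'a \<Rightarrow> bool) \<Rightarrow> nat \<Rightarrow> 'a set set" where
  "copies V E l = {A. A \<subseteq> V \<and> card A = l \<and> (\<forall>x\<in>A. \<forall>y\<in>A. x \<noteq> y \<longrightarrow> E x y)}"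

definition clique_walk :: "'a set \<Rightarrow> ('a \<Rightarrow> 'a \<Rightarrow> bool) \<Rightarrow> nat \<Rightarrow> 'a set list \<Rightarrow> bool" where
  "clique_walk V E k ts \<longleftrightarrow> ts \<noteq> [] \<and> set ts \<subseteq> copies V E k \<and>
     (\<forall>i. Suc i < length ts \<longrightarrow>
        (\<exists>s\<in>copies V E (Suc k). ts ! i \<subseteq> s \<and> ts ! Suc i \<subseteq> s))"

definition clique_connected :: "'a set \<Rightarrow> ('a \<Rightarrow> 'a \<Rightarrow> bool) \<Rightarrow> nat \<Rightarrow> 'a set \<Rightarrow> 'a set \<Rightarrow> bool" where
  "clique_connected V E k t t' \<longleftrightarrow>
     (\<exists>ts. clique_walk V E k ts \<and> hd ts = t \<and> last ts = t')"

text \<open>K_{k+1}-components: equivalence classes of copies of K_k.\<close>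
definition clique_component :: "'a set \<Rightarrow> ('a \<Rightarrow> 'a \<Rightarrow> bool) \<Rightarrow> nat \<Rightarrow> 'a set set \<Rightarrow> bool" where
  "clique_component V E k C \<longleftrightarrow>
     (\<exists>t\<in>copies V E k. C = {t'. clique_connected V E k t t'})"

definition belongs_to :: "'a set \<Rightarrow> 'a set set \<Rightarrow> bool" where
  "belongs_to s C \<longleftrightarrow> (\<exists>t\<in>C. t \<subseteq> s)"

end

theory Submission
  imports Defs
begin


definition cnb :: "'a set \<Rightarrow> ('a \<Rightarrow> 'a \<Rightarrow> bool) \<Rightarrow> 'a set \<Rightarrow> 'a set" where
  "cnb V E u = {x\<in>V. \<forall>y\<in>u. E x y}"

lemma walk_butlast:
  assumes "clique_walk V E k (zs @ [z])" "zs \<noteq> []"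
  shows "clique_walk V E k zs"
  unfolding clique_walk_def
proof (intro conjI allI impI)
  show "zs \<noteq> []" by fact
  show "set zs \<subseteq> copies V E k" using assms(1) unfolding clique_walk_def by auto
  fix i assume i: "Suc i < length zs"
  then have "Suc i < length (zs @ [z])" by simp
  then obtain s where "s\<in>copies V E (Suc k)" "(zs @ [z]) ! i \<subseteq> s" "(zs @ [z]) ! Suc i \<subseteq> s"
    using assms(1) unfolding clique_walk_def by blast
  then show "\<exists>s\<in>copies V E (Suc k). zs ! i \<subseteq> s \<and> zs ! Suc i \<subseteq> s"
    using i by (auto simp: nth_append)
qed

lemma walk_snoc:
  assumes "clique_walk V E k ts" "t' \<in> copies V E k" "s \<in> copies V E (Suc k)"
    "last ts \<subseteq> s" "t' \<subseteq> s"
  shows "clique_walk V E k (ts @ [t'])"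
  unfolding clique_walk_def
proof (intro conjI allI impI)
  show "ts @ [t'] \<noteq> []" by simp
  show "set (ts @ [t']) \<subseteq> copies V E k" using assms(1,2) unfolding clique_walk_def by auto
  fix i assume i: "Suc i < length (ts @ [t'])"
  show "\<exists>s\<in>copies V E (Suc k). (ts @ [t']) ! i \<subseteq> s \<and> (ts @ [t']) ! Suc i \<subseteq> s"
  proof (cases "Suc i < length ts")
    case True
    then show ?thesis using assms(1) unfolding clique_walk_def by (auto simp: nth_append)
  next
    case False
    then have "i = length ts - 1" "ts \<noteq> []" using i assms(1) unfolding clique_walk_def by auto
    then have "(ts @ [t']) ! i = last ts" "(ts @ [t']) ! Suc i = t'"
      by (auto simp: nth_append last_conv_nth)
    then show ?thesis using assms(3,4,5) by auto
  qed
qed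

lemma conn_snoc:
  assumes "clique_connected V E k t u" "t' \<in> copies V E k" "s \<in> copies V E (Suc k)"
    "u \<subseteq> s" "t' \<subseteq> s"
  shows "clique_connected V E k t t'"
proof -
  obtain ts where ts: "clique_walk V E k ts" "hd ts = t" "last ts = u"
    using assms(1) unfolding clique_connected_def by auto
  have "clique_walk V E k (ts @ [t'])" using walk_snoc[OF ts(1) assms(2,3)] ts(3) assms(4,5) by auto
  moreover have "hd (ts @ [t']) = t" using ts(1,2) unfolding clique_walk_def by auto
  ultimately show ?thesis unfolding clique_connected_def by (metis last_snoc)
qed

lemma conn_trans_walk:
  assumes "clique_walk V E k ys" "clique_connected V E k t (hd ys)"
  shows "clique_connected V E k t (last ys)"
  using assms
proof (induction ys rule: rev_induct)
  case Nil then show ?case unfolding clique_walk_def by simp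
next
  case (snoc z zs)
  show ?case
  proof (cases "zs = []")
    case True then show ?thesis using snoc by simp
  next
    case False
    have w: "clique_walk V E k zs" using walk_butlast snoc.prems(1) False by blast
    have c: "clique_connected V E k t (last zs)" using snoc.IH[OF w] snoc.prems(2) False by simp
    have "Suc (length zs - 1) < length (zs @ [z])" using False by simp
    then obtain s where s: "s \<in> copies V E (Suc k)" "(zs @ [z]) ! (length zs - 1) \<subseteq> s"
      "(zs @ [z]) ! Suc (length zs - 1) \<subseteq> s"
      using snoc.prems(1) unfolding clique_walk_def by blast
    have "(zs @ [z]) ! (length zs - 1) = last zs" "(zs @ [z]) ! Suc (length zs - 1) = z"
      using False by (auto simp: nth_append last_conv_nth)
    moreover have "z \<in> copies V E k" using snoc.prems(1) unfolding clique_walk_def by auto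
    ultimately show ?thesis using conn_snoc[OF c _ s(1)] s by auto
  qed
qed

lemma conn_trans:
  assumes "clique_connected V E k t u" "clique_connected V E k u w"
  shows "clique_connected V E k t w"
  using assms(2) conn_trans_walk[OF _ ] assms(1) unfolding clique_connected_def by metis

lemma comp_sub:
  assumes "clique_component V E k C"
  shows "C \<subseteq> copies V E k"
proof
  fix u assume "u \<in> C"
  then obtain t ts where "clique_walk V E k ts" "last ts = u"
    using assms unfolding clique_component_def clique_connected_def by auto
  then show "u \<in> copies V E k" unfolding clique_walk_def by (metis last_in_set subsetD)
qed

lemma comp_conn:
  assumes "clique_component V E k C" "u \<in> C" "clique_connected V E k u w"
  shows "w \<in> C"
proof -
  obtain t where t: "C = {t'. clique_connected V E k t t'}"
    using assms(1) unfolding clique_component_def by auto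
  have "clique_connected V E k t u" using assms(2) t by auto
  then have "clique_connected V E k t w" using conn_trans assms(3) by metis
  then show ?thesis using t by auto
qed

lemma comp_nonempty:
  assumes "clique_component V E k C"
  shows "\<exists>t. t \<in> C"
proof -
  obtain t where "t \<in> copies V E k" "C = {t'. clique_connected V E k t t'}"
    using assms unfolding clique_component_def by auto
  moreover have "clique_walk V E k [t]" using calculation unfolding clique_walk_def by auto
  then have "clique_connected V E k t t" using calculation unfolding clique_connected_def
    by (metis last.simps list.sel(1))
  then show ?thesis using calculation by auto
qed



lemma indep:
  assumes sg: "simple_graph V E" and k: "k \<ge> 1" and cc: "clique_component V E k C"
    and no: "\<not> (\<exists>s\<in>copies V E (k + 2). belongs_to s C)"
    and u: "u \<in> C" and x: "x \<in> cnb V E u" and y: "y \<in> cnb V E u" and xy: "x \<noteq> y"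
  shows "\<not> E x y"
proof
  assume e: "E x y"
  have uc: "u \<in> copies V E k" using comp_sub[OF cc] u by auto
  then have fu: "finite u" "card u = k" "u \<subseteq> V" using k unfolding copies_def by (auto intro: card_ge_0_finite)
  have irr: "\<And>a. \<not> E a a" and sym: "\<And>a b. E a b \<Longrightarrow> E b a" using sg unfolding simple_graph_def by auto
  have xu: "x \<notin> u" using x irr unfolding cnb_def by auto
  have yu: "y \<notin> u" using y irr unfolding cnb_def by auto
  have "insert x (insert y u) \<in> copies V E (k + 2)"
    using uc fu xu yu xy x y e sym unfolding copies_def cnb_def by auto
  moreover have "belongs_to (insert x (insert y u)) C" unfolding belongs_to_def using u by auto
  ultimately show False using no by auto
qed

lemma cnb_s_le1:
  assumes sg: "simple_graph V E" and k: "k \<ge> 1" and cc: "clique_component V E k C"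
    and no: "\<not> (\<exists>s\<in>copies V E (k + 2). belongs_to s C)"
    and u: "u \<in> C" and scl: "\<forall>a\<in>s. \<forall>b\<in>s. a \<noteq> b \<longrightarrow> E a b" and fs: "finite s"
  shows "card (cnb V E u - s) \<ge> card (cnb V E u) - 1"
proof -
  have "card (cnb V E u \<inter> s) \<le> Suc 0"
    using fs by (subst card_le_Suc0_iff_eq) (use indep[OF sg k cc no u] scl in auto)
  moreover have "card (cnb V E u - s) = card (cnb V E u) - card (cnb V E u \<inter> s)"
    using fs by (simp add: card_Diff_subset_Int)
  ultimately show ?thesis by simp
qed

lemma escape:
  assumes sg: "simple_graph V E" and k: "k \<ge> 1" and cc: "clique_component V E k C"
    and no: "\<not> (\<exists>s\<in>copies V E (k + 2). belongs_to s C)"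
    and big: "\<forall>u\<in>C. card (cnb V E u) \<ge> 2"
    and scl: "\<forall>a\<in>s. \<forall>b\<in>s. a \<noteq> b \<longrightarrow> E a b" and fs: "finite s"
  shows "u \<in> C \<Longrightarrow> \<exists>u'\<in>C. u' \<inter> s = {}"
proof (induction "card (u \<inter> s)" arbitrary: u rule: less_induct)
  case less
  show ?case
  proof (cases "u \<inter> s = {}")
    case True then show ?thesis using less by auto
  next
    case False
    then obtain w where w: "w \<in> u" "w \<in> s" by auto
    have "card (cnb V E u - s) \<ge> 1" using cnb_s_le1[OF sg k cc no less.prems scl fs] big less.prems by fastforce
    then obtain y where y: "y \<in> cnb V E u" "y \<notin> s" 
    proof -
      have "cnb V E u - s \<noteq> {}" using \<open>card (cnb V E u - s) \<ge> 1\<close> by (metis card.empty not_one_le_zero)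
      then show ?thesis using that by blast
    qed
    have uc: "u \<in> copies V E k" using comp_sub[OF cc] less.prems by auto
    then have fu: "finite u" "card u = k" "u \<subseteq> V" using k unfolding copies_def by (auto intro: card_ge_0_finite)
    have irr: "\<And>a. \<not> E a a" and sym: "\<And>a b. E a b \<Longrightarrow> E b a" using sg unfolding simple_graph_def by auto
    have yu: "y \<notin> u" using y irr unfolding cnb_def by auto
    define u' where "u' = insert y (u - {w})"
    have "card u' = k" unfolding u'_def using fu yu w k by (simp add: card_insert_if)
    then have u'c: "u' \<in> copies V E k" using uc y sym unfolding copies_def cnb_def u'_def by auto
    have sc: "insert y u \<in> copies V E (Suc k)" using uc y sym fu yu unfolding copies_def cnb_def by auto
    have "clique_walk V E k [u, u']" unfolding clique_walk_def using uc u'c sc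
      by (auto simp: less_Suc_eq u'_def intro!: bexI[of _ "insert y u"])
    then have "clique_connected V E k u u'" unfolding clique_connected_def
      by (metis last.simps list.sel(1) list.discI)
    then have u'C: "u' \<in> C" using comp_conn[OF cc less.prems] by auto
    have "u' \<inter> s = (u \<inter> s) - {w}" unfolding u'_def using y w by auto
    then have "card (u' \<inter> s) < card (u \<inter> s)" using w fs by (metis IntI card_Diff1_less finite_Int)
    then show ?thesis using less.hyps u'C by blast
  qed
qed



definition subE :: "('a \<Rightarrow> 'a \<Rightarrow> bool) \<Rightarrow> 'a set \<Rightarrow> 'a \<Rightarrow> 'a \<Rightarrow> bool" where
  "subE E s x y \<longleftrightarrow> E x y \<and> x \<notin> s \<and> y \<notin> s"

lemma sub_sg: "simple_graph V E \<Longrightarrow> simple_graph (V - s) (subE E s)"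
  unfolding simple_graph_def subE_def by auto

lemma sub_copies: "copies (V - s) (subE E s) l = {A \<in> copies V E l. A \<inter> s = {}}"
  unfolding copies_def subE_def by auto

lemma sub_walk: "clique_walk (V - s) (subE E s) k ts \<Longrightarrow> clique_walk V E k ts"
proof -
  have sub: "\<And>l. copies (V - s) (subE E s) l \<subseteq> copies V E l" by (auto simp: sub_copies)
  assume w: "clique_walk (V - s) (subE E s) k ts"
  show ?thesis unfolding clique_walk_def
  proof (intro conjI allI impI)
    show "ts \<noteq> []" using w unfolding clique_walk_def by simp
    show "set ts \<subseteq> copies V E k" using w sub[of k] unfolding clique_walk_def by (meson subset_trans)
    fix i assume "Suc i < length ts"
    then obtain s' where "s' \<in> copies (V - s) (subE E s) (Suc k)" "ts ! i \<subseteq> s'" "ts ! Suc i \<subseteq> s'"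
      using w unfolding clique_walk_def by blast
    then show "\<exists>s\<in>copies V E (Suc k). ts ! i \<subseteq> s \<and> ts ! Suc i \<subseteq> s" using sub[of "Suc k"] by blast
  qed
qed

lemma sub_conn: "clique_connected (V - s) (subE E s) k t u \<Longrightarrow> clique_connected V E k t u"
  unfolding clique_connected_def using sub_walk by metis

lemma sub_cnb: "u \<inter> s = {} \<Longrightarrow> cnb (V - s) (subE E s) u = cnb V E u - s"
  unfolding cnb_def subE_def by auto

lemma main_ind:
  assumes "simple_graph V E" "k \<ge> 1" "clique_component V E k C"
    "\<not> (\<exists>s\<in>copies V E (k + 2). belongs_to s C)" "\<forall>u\<in>C. card (cnb V E u) \<ge> m"
  shows "\<exists>S. S \<subseteq> copies V E (k + 1) \<and> pairwise disjnt S \<and> card S = m \<and> (\<forall>s\<in>S. belongs_to s C)"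
  using assms
proof (induction m arbitrary: V E C)
  case 0
  then show ?case by (intro exI[of _ "{}"]) auto
next
  case (Suc m)
  note sg = Suc.prems(1) and k = Suc.prems(2) and cc = Suc.prems(3) and no = Suc.prems(4)
    and big = Suc.prems(5)
  have irr: "\<And>a. \<not> E a a" and sym: "\<And>a b. E a b \<Longrightarrow> E b a" and fV: "finite V"
    using sg unfolding simple_graph_def by auto
  obtain t where tC: "t \<in> C" using comp_nonempty[OF cc] by auto
  have tc: "t \<in> copies V E k" using comp_sub[OF cc] tC by auto
  then have ft: "finite t" "card t = k" "t \<subseteq> V" using k unfolding copies_def by (auto intro: card_ge_0_finite)
  have "cnb V E t \<noteq> {}" using big tC by (metis card.empty not_less_eq_eq zero_le)
  then obtain x where x: "x \<in> cnb V E t" by auto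
  have xt: "x \<notin> t" using x irr unfolding cnb_def by auto
  define s where "s = insert x t"
  have sc: "s \<in> copies V E (k + 1)" using tc x sym xt ft unfolding s_def copies_def cnb_def by auto
  have sb: "belongs_to s C" unfolding belongs_to_def s_def using tC by auto
  have scl: "\<forall>a\<in>s. \<forall>b\<in>s. a \<noteq> b \<longrightarrow> E a b" and fs: "finite s" and sne: "s \<noteq> {}"
    using sc ft unfolding copies_def s_def by auto
  show ?case
  proof (cases "m = 0")
    case True
    then show ?thesis using sc sb by (intro exI[of _ "{s}"]) auto
  next
    case False
    have big2: "\<forall>u\<in>C. card (cnb V E u) \<ge> 2" using big False by fastforce
    obtain t0 where t0: "t0 \<in> C" "t0 \<inter> s = {}" using escape[OF sg k cc no big2 scl fs tC] by auto
    define C' where "C' = {t'. clique_connected (V - s) (subE E s) k t0 t'}"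
    have t0c': "t0 \<in> copies (V - s) (subE E s) k" using t0 comp_sub[OF cc] by (auto simp: sub_copies)
    have cc': "clique_component (V - s) (subE E s) k C'"
      unfolding clique_component_def C'_def using t0c' by blast
    have C'C: "C' \<subseteq> C" unfolding C'_def using comp_conn[OF cc t0(1)] sub_conn by blast
    have no': "\<not> (\<exists>s'\<in>copies (V - s) (subE E s) (k + 2). belongs_to s' C')"
      using no C'C unfolding sub_copies belongs_to_def by auto
    have big': "\<forall>u\<in>C'. card (cnb (V - s) (subE E s) u) \<ge> m"
    proof
      fix u assume uC': "u \<in> C'"
      have "u \<in> copies (V - s) (subE E s) k" using comp_sub[OF cc'] uC' by auto
      then have us: "u \<inter> s = {}" by (simp add: sub_copies)
      have uC: "u \<in> C" using uC' C'C by auto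
      have "card (cnb V E u - s) \<ge> card (cnb V E u) - 1" using cnb_s_le1[OF sg k cc no uC scl fs] .
      then show "card (cnb (V - s) (subE E s) u) \<ge> m" using sub_cnb[OF us] big uC by fastforce
    qed
    obtain S where S: "S \<subseteq> copies (V - s) (subE E s) (k + 1)" "pairwise disjnt S" "card S = m"
      "\<forall>s'\<in>S. belongs_to s' C'"
      using Suc.IH[OF sub_sg[OF sg] k cc' no' big'] by blast
    have Sd: "\<forall>s'\<in>S. s' \<inter> s = {}" using S(1) by (auto simp: sub_copies)
    have Sc: "S \<subseteq> copies V E (k + 1)" using S(1) by (auto simp: sub_copies)
    have sS: "s \<notin> S" using Sd sne by auto
    have fS: "finite S" using S(3) False card.infinite by fastforce
    show ?thesis
    proof (intro exI[of _ "insert s S"] conjI)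
      show "insert s S \<subseteq> copies V E (k + 1)" using Sc sc by auto
      show "pairwise disjnt (insert s S)" using S(2) Sd sS
        by (auto simp: pairwise_insert disjnt_def)
      show "card (insert s S) = Suc m" using fS sS S(3) by simp
      have "\<And>s'. s' \<in> S \<Longrightarrow> belongs_to s' C"
      proof -
        fix s' assume "s' \<in> S"
        then obtain t' where "t' \<in> C'" "t' \<subseteq> s'" using S(4) unfolding belongs_to_def by auto
        then show "belongs_to s' C" using C'C unfolding belongs_to_def by auto
      qed
      then show "\<forall>s'\<in>insert s S. belongs_to s' C" using sb by auto
    qed
  qed
qed



lemma cnb_card:
  assumes sg: "simple_graph V E" and n: "card V = n" and k: "k \<ge> 1"
    and deg: "\<forall>v\<in>V. degree V E v \<ge> \<delta>" and u: "u \<in> copies V E k"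
  shows "card (cnb V E u) \<ge> n - k * (n - \<delta>)"
proof -
  have sym: "\<And>a b. E a b \<Longrightarrow> E b a" and fV: "finite V"
    using sg unfolding simple_graph_def by auto
  have fu: "finite u" "card u = k" "u \<subseteq> V" using u k unfolding copies_def by (auto intro: card_ge_0_finite)
  define B where "B = (\<Union>v\<in>u. {x\<in>V. \<not> E v x})"
  have eq: "cnb V E u = V - B" unfolding cnb_def B_def using sym by blast
  have each: "card {x\<in>V. \<not> E v x} \<le> n - \<delta>" if "v \<in> u" for v
  proof -
    have "{x\<in>V. \<not> E v x} = V - {x\<in>V. E v x}" by auto
    then have "card {x\<in>V. \<not> E v x} = n - degree V E v"
      using fV n unfolding degree_def by (simp add: card_Diff_subset)
    moreover have "degree V E v \<ge> \<delta>" using deg that fu by auto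
    ultimately show ?thesis by simp
  qed
  have "card B \<le> (\<Sum>v\<in>u. card {x\<in>V. \<not> E v x})" unfolding B_def by (rule card_UN_le[OF fu(1)])
  also have "\<dots> \<le> card u * (n - \<delta>)" using each sum_bounded_above[of u "\<lambda>v. card {x\<in>V. \<not> E v x}" "n - \<delta>"] by simp
  finally have "card B \<le> k * (n - \<delta>)" using fu by simp
  moreover have "card (V - B) \<ge> card V - card B" by (rule diff_card_le_card_Diff) (use fV fu in \<open>simp add: B_def\<close>)
  ultimately show ?thesis using eq n by simp
qed

theorem lemma4p2:
  fixes V :: "'a set" and E :: "'a \<Rightarrow> 'a \<Rightarrow> bool" and k n \<delta> :: nat and C :: "'a set set"
  assumes "simple_graph V E"
    and "card V = n"
    and "k \<ge> 1"
    and "\<forall>v\<in>V. degree V E v \<ge> \<delta>"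
    and "real \<delta> \<ge> real ((k - 1) * n) / real k"
    and "clique_component V E k C"
    and "\<not> (\<exists>s\<in>copies V E (k + 2). belongs_to s C)"
  shows "\<exists>S. S \<subseteq> copies V E (k + 1) \<and> pairwise disjnt S \<and>
             card S = k * \<delta> - (k - 1) * n \<and> (\<forall>s\<in>S. belongs_to s C)"
proof (rule main_ind[OF assms(1,3,6,7)], intro ballI)
  fix u assume uC: "u \<in> C"
  have u: "u \<in> copies V E k" using comp_sub[OF assms(6)] uC by auto
  have h: "card (cnb V E u) \<ge> n - k * (n - \<delta>)" by (rule cnb_card[OF assms(1,2,3,4) u])
  have fV: "finite V" using assms(1) unfolding simple_graph_def by auto
  have "u \<noteq> {}" "u \<subseteq> V" using u assms(3) unfolding copies_def by auto
  then obtain v where v: "v \<in> V" by auto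
  have "degree V E v \<le> n" unfolding degree_def using assms(2) fV by (metis (no_types, lifting) card_mono mem_Collect_eq subsetI)
  then have dn: "\<delta> \<le> n" using assms(4) v by fastforce
  have "k * \<delta> - (k - 1) * n \<le> n - k * (n - \<delta>)"
  proof -
    have "k * (n - \<delta>) = k * n - k * \<delta>" by (simp add: diff_mult_distrib2)
    moreover have "(k - 1) * n = k * n - n" by (simp add: diff_mult_distrib)
    moreover have "k * \<delta> \<le> k * n" using dn by simp
    ultimately show ?thesis by linarith
  qed
  then show "k * \<delta> - (k - 1) * n \<le> card (cnb V E u)" using h by linarith
qed

end
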